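(* Let $\mathbf A=(A;\vee,\wedge,\cdot,\rightarrow,0,1)$ be a complete residuated lattice and let $I$, $J$ be arbitrary sets. (i) Let $\phi\colon A^I\to A^J$ and $\rho\colon A^J\to A^I$ form a Galois connection between $A^I$ and $A^J$ (i.e. $y\le \phi(x)$ iff $\rho(y)\le x$ for all $x\in A^I$, $y\in A^J$). Then $\phi$ is a $\phi$-type mapping if and only if $\rho$ is a $\rho$-type mapping. (ii) Let $\delta\colon A^I\to A^J$ and $\epsilon\colon A^J\to A^I$ form a reversed Galois connection between $A^I$ and $A^J$ (i.e. both are antitone and $y\le\delta(x)$ iff $x\le\epsilon(y)$ for all $x\in A^I$, $y\in A^J$). Then $\delta$ is a $\delta$-type mapping if and only if $\epsilon$ is a $\delta$-type mapping.
   Context: A residuated lattice is an algebra $\mathbf A=(A;\vee,\wedge,\cdot,\rightarrow,0,1)$ such that $(A;\vee,\wedge,0,1)$ is a bounded lattice, $(A;\cdot,1)$ is a commutative monoid, and $x\cdot y\le z$ iff $x\le y\rightarrow z$. It is complete if its lattice reduct is a complete lattice. For a set $K$, $A^K$ carries the componentwise operations and order. For $d\in A$, $d^K\in A^K$ denotes the diagonal element $d^K(k)=d$ for all $k\in K$. A mapping between complete lattices is infima preserving if $f(\bigwedge M)=\bigwedge f(M)$ for every subset $M$; suprema preserving if $f(\bigvee M)=\bigvee f(M)$ for every $M$; suprema reversing if $f(\bigvee M)=\bigwedge f(M)$ for every $M$. For sets $K,L$: a mapping $\phi\colon A^K\to A^L$ is a $\phi$-type mapping if it is infima preserving and $d^L\rightarrow\phi(x)=\phi(d^K\rightarrow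 x)$ for all $d\in A$, $x\in A^K$; a mapping $\rho\colon A^L\to A^K$ is a $\rho$-type mapping if it is suprema preserving and $d^K\cdot\rho(x)=\rho(d^L\cdot x)$ for all $d\in A$, $x\in A^L$; a mapping $\delta\colon A^K\to A^L$ is a $\delta$-type mapping if it is suprema reversing and $d^L\rightarrow\delta(x)=\delta(d^K\cdot x)$ for all $d\in A$, $x\in A^K$ (this applies in particular with $K=J$, $L=I$ for maps $A^J\to A^I$). *)

theory Defs
  imports Main
begin

text \<open>A complete residuated lattice: the complete lattice reduct is the type class
  complete_lattice (0 = bot, 1 = top); mult is the commutative monoid operation with
  unit top (the lattice 1), and imp is its residuum.\<close>
definition complete_residuated_lattice ::
  "('a::complete_lattice \<Rightarrow> 'a \<Rightarrow> 'a) \<Rightarrow> ('a \<Rightarrow> 'a \<Rightarrow> 'a) \<Rightarrow> bool" where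
  "complete_residuated_lattice mult imp \<longleftrightarrow>
     (\<forall>x y z. mult (mult x y) z = mult x (mult y z)) \<and>
     (\<forall>x y. mult x y = mult y x) \<and>
     (\<forall>x. mult x top = x) \<and>
     (\<forall>x y z. mult x y \<le> z \<longleftrightarrow> x \<le> imp y z)"

text \<open>A^K is the function type 'k => 'a with the pointwise (componentwise) order.\<close>

definition phi_type ::
  "('a::complete_lattice \<Rightarrow> 'a \<Rightarrow> 'a) \<Rightarrow> (('k \<Rightarrow> 'a) \<Rightarrow> ('l \<Rightarrow> 'a)) \<Rightarrow> bool" where
  "phi_type imp \<phi> \<longleftrightarrow>
     (\<forall>M. \<phi> (Inf M) = Inf (\<phi> ` M)) \<and>
     (\<forall>d x. (\<lambda>l. imp d (\<phi> x l)) = \<phi> (\<lambda>k. imp d (x k)))"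

definition rho_type ::
  "('a::complete_lattice \<Rightarrow> 'a \<Rightarrow> 'a) \<Rightarrow> (('l \<Rightarrow> 'a) \<Rightarrow> ('k \<Rightarrow> 'a)) \<Rightarrow> bool" where
  "rho_type mult \<rho> \<longleftrightarrow>
     (\<forall>M. \<rho> (Sup M) = Sup (\<rho> ` M)) \<and>
     (\<forall>d x. (\<lambda>k. mult d (\<rho> x k)) = \<rho> (\<lambda>l. mult d (x l)))"

definition delta_type ::
  "('a::complete_lattice \<Rightarrow> 'a \<Rightarrow> 'a) \<Rightarrow> ('a \<Rightarrow> 'a \<Rightarrow> 'a) \<Rightarrow>
   (('k \<Rightarrow> 'a) \<Rightarrow> ('l \<Rightarrow> 'a)) \<Rightarrow> bool" where
  "delta_type mult imp \<delta> \<longleftrightarrow>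
     (\<forall>M. \<delta> (Sup M) = Inf (\<delta> ` M)) \<and>
     (\<forall>d x. (\<lambda>l. imp d (\<delta> x l)) = \<delta> (\<lambda>k. mult d (x k)))"

end

theory Submission
  imports Defs
begin

lemma adj:
  assumes "complete_residuated_lattice mult imp"
  shows "((\<lambda>l. mult d (f l)) \<le> g) \<longleftrightarrow> (f \<le> (\<lambda>l. imp d (g l)))"
  using assms unfolding complete_residuated_lattice_def le_fun_def by metis

lemma eq_by_le: "(\<And>z::'b::order. z \<le> a \<longleftrightarrow> z \<le> b) \<Longrightarrow> a = b"
  by (meson order.antisym order.refl)

lemma eq_by_ge: "(\<And>z::'b::order. a \<le> z \<longleftrightarrow> b \<le> z) \<Longrightarrow> a = b"
  by (meson order.antisym order.refl)

lemma part1: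
  fixes \<phi> :: "('i \<Rightarrow> 'a::complete_lattice) \<Rightarrow> ('j \<Rightarrow> 'a)" and \<rho> :: "('j \<Rightarrow> 'a) \<Rightarrow> ('i \<Rightarrow> 'a)"
  assumes A: "complete_residuated_lattice mult imp"
    and G: "\<forall>x y. y \<le> \<phi> x \<longleftrightarrow> \<rho> y \<le> x"
  shows "phi_type imp \<phi> \<longleftrightarrow> rho_type mult \<rho>"
proof -
  have inf: "\<phi> (Inf M) = Inf (\<phi> ` M)" for M
    by (rule eq_by_le) (auto simp: G le_Inf_iff)
  have sup: "\<rho> (Sup M) = Sup (\<rho> ` M)" for M
    by (rule eq_by_ge) (metis (no_types, lifting) G SUP_le_iff Sup_le_iff)
  have "(\<forall>d x. (\<lambda>l. imp d (\<phi> x l)) = \<phi> (\<lambda>k. imp d (x k))) \<longleftrightarrow>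
        (\<forall>d x. (\<lambda>k. mult d (\<rho> x k)) = \<rho> (\<lambda>l. mult d (x l)))"
  proof
    assume H: "\<forall>d x. (\<lambda>l. imp d (\<phi> x l)) = \<phi> (\<lambda>k. imp d (x k))"
    show "\<forall>d x. (\<lambda>k. mult d (\<rho> x k)) = \<rho> (\<lambda>l. mult d (x l))"
    proof (intro allI)
      fix d y
      show "(\<lambda>k. mult d (\<rho> y k)) = \<rho> (\<lambda>l. mult d (y l))"
      proof (rule eq_by_ge)
        fix x
        have "\<rho> (\<lambda>l. mult d (y l)) \<le> x \<longleftrightarrow> (\<lambda>l. mult d (y l)) \<le> \<phi> x" by (simp add: G)
        also have "\<dots> \<longleftrightarrow> y \<le> (\<lambda>l. imp d (\<phi> x l))" by (rule adj[OF A])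
        also have "\<dots> \<longleftrightarrow> y \<le> \<phi> (\<lambda>k. imp d (x k))" using H by metis
        also have "\<dots> \<longleftrightarrow> \<rho> y \<le> (\<lambda>k. imp d (x k))" by (simp add: G)
        also have "\<dots> \<longleftrightarrow> (\<lambda>k. mult d (\<rho> y k)) \<le> x" by (rule adj[OF A, symmetric])
        finally show "(\<lambda>k. mult d (\<rho> y k)) \<le> x \<longleftrightarrow> \<rho> (\<lambda>l. mult d (y l)) \<le> x" by simp
      qed
    qed
  next
    assume H: "\<forall>d x. (\<lambda>k. mult d (\<rho> x k)) = \<rho> (\<lambda>l. mult d (x l))"
    show "\<forall>d x. (\<lambda>l. imp d (\<phi> x l)) = \<phi> (\<lambda>k. imp d (x k))"
    proof (intro allI)
      fix d x
      show "(\<lambda>l. imp d (\<phi> x l)) = \<phi> (\<lambda>k. imp d (x k))"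
      proof (rule eq_by_le)
        fix y
        have "y \<le> \<phi> (\<lambda>k. imp d (x k)) \<longleftrightarrow> \<rho> y \<le> (\<lambda>k. imp d (x k))" by (simp add: G)
        also have "\<dots> \<longleftrightarrow> (\<lambda>k. mult d (\<rho> y k)) \<le> x" by (rule adj[OF A, symmetric])
        also have "\<dots> \<longleftrightarrow> \<rho> (\<lambda>l. mult d (y l)) \<le> x" using H by metis
        also have "\<dots> \<longleftrightarrow> (\<lambda>l. mult d (y l)) \<le> \<phi> x" by (simp add: G)
        also have "\<dots> \<longleftrightarrow> y \<le> (\<lambda>l. imp d (\<phi> x l))" by (rule adj[OF A])
        finally show "y \<le> (\<lambda>l. imp d (\<phi> x l)) \<longleftrightarrow> y \<le> \<phi> (\<lambda>k. imp d (x k))" by simp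
      qed
    qed
  qed
  thus ?thesis unfolding phi_type_def rho_type_def using inf sup by simp
qed

lemma part2_dir:
  fixes \<delta> :: "('i \<Rightarrow> 'a::complete_lattice) \<Rightarrow> ('j \<Rightarrow> 'a)" and \<epsilon> :: "('j \<Rightarrow> 'a) \<Rightarrow> ('i \<Rightarrow> 'a)"
  assumes A: "complete_residuated_lattice mult imp"
    and G: "\<forall>x y. y \<le> \<delta> x \<longleftrightarrow> x \<le> \<epsilon> y"
    and D: "delta_type mult imp \<delta>"
  shows "delta_type mult imp \<epsilon>"
proof -
  have sup: "\<epsilon> (Sup M) = Inf (\<epsilon> ` M)" for M
    by (rule eq_by_le) (metis (no_types, lifting) G le_INF_iff Sup_le_iff)
  have H: "\<forall>d x. (\<lambda>l. imp d (\<delta> x l)) = \<delta> (\<lambda>k. mult d (x k))"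
    using D unfolding delta_type_def by blast
  have "(\<lambda>l. imp d (\<epsilon> y l)) = \<epsilon> (\<lambda>k. mult d (y k))" for d y
  proof (rule eq_by_le)
    fix x
    have "x \<le> \<epsilon> (\<lambda>k. mult d (y k)) \<longleftrightarrow> (\<lambda>k. mult d (y k)) \<le> \<delta> x" by (simp add: G)
    also have "\<dots> \<longleftrightarrow> y \<le> (\<lambda>l. imp d (\<delta> x l))" by (rule adj[OF A])
    also have "\<dots> \<longleftrightarrow> y \<le> \<delta> (\<lambda>k. mult d (x k))" using H by metis
    also have "\<dots> \<longleftrightarrow> (\<lambda>k. mult d (x k)) \<le> \<epsilon> y" by (simp add: G)
    also have "\<dots> \<longleftrightarrow> x \<le> (\<lambda>l. imp d (\<epsilon> y l))" by (rule adj[OF A])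
    finally show "x \<le> (\<lambda>l. imp d (\<epsilon> y l)) \<longleftrightarrow> x \<le> \<epsilon> (\<lambda>k. mult d (y k))" by simp
  qed
  thus ?thesis unfolding delta_type_def using sup by simp
qed

theorem lemma4:
  fixes mult imp :: "'a::complete_lattice \<Rightarrow> 'a \<Rightarrow> 'a"
  assumes "complete_residuated_lattice mult imp"
  shows "(\<forall>(\<phi>::('i \<Rightarrow> 'a) \<Rightarrow> ('j \<Rightarrow> 'a)) (\<rho>::('j \<Rightarrow> 'a) \<Rightarrow> ('i \<Rightarrow> 'a)).
           (\<forall>x y. y \<le> \<phi> x \<longleftrightarrow> \<rho> y \<le> x) \<longrightarrow>
           (phi_type imp \<phi> \<longleftrightarrow> rho_type mult \<rho>)) \<and>
         (\<forall>(\<delta>::('i \<Rightarrow> 'a) \<Rightarrow> ('j \<Rightarrow> 'a)) (\<epsilon>::('j \<Rightarrow> 'a) \<Rightarrow> ('i \<Rightarrow> 'a)).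
           (antimono \<delta> \<and> antimono \<epsilon> \<and> (\<forall>x y. y \<le> \<delta> x \<longleftrightarrow> x \<le> \<epsilon> y)) \<longrightarrow>
           (delta_type mult imp \<delta> \<longleftrightarrow> delta_type mult imp \<epsilon>))"
proof (intro conjI allI impI)
  fix \<phi> :: "('i \<Rightarrow> 'a) \<Rightarrow> ('j \<Rightarrow> 'a)" and \<rho> :: "('j \<Rightarrow> 'a) \<Rightarrow> ('i \<Rightarrow> 'a)"
  assume "\<forall>x y. y \<le> \<phi> x \<longleftrightarrow> \<rho> y \<le> x"
  thus "phi_type imp \<phi> \<longleftrightarrow> rho_type mult \<rho>" by (rule part1[OF assms])
next
  fix \<delta> :: "('i \<Rightarrow> 'a) \<Rightarrow> ('j \<Rightarrow> 'a)" and \<epsilon> :: "('j \<Rightarrow> 'a) \<Rightarrow> ('i \<Rightarrow> 'a)"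
  assume "antimono \<delta> \<and> antimono \<epsilon> \<and> (\<forall>x y. y \<le> \<delta> x \<longleftrightarrow> x \<le> \<epsilon> y)"
  hence G: "\<forall>x y. y \<le> \<delta> x \<longleftrightarrow> x \<le> \<epsilon> y" by blast
  have G': "\<forall>x y. y \<le> \<epsilon> x \<longleftrightarrow> x \<le> \<delta> y" using G by blast
  show "delta_type mult imp \<delta> \<longleftrightarrow> delta_type mult imp \<epsilon>"
    using part2_dir[OF assms G] part2_dir[OF assms G'] by blast
qed

end
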